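(* For any finite alphabet $\mathfrak{G}$, the hook series of $(\mathbf{S}_\bullet(\mathfrak{G}), \mathbf{V})$ satisfies $\langle\mathfrak{t},\mathbf{H}_\mathbf{V}\rangle = \tilde{h}(\mathfrak{t})$ for any $\mathfrak{G}$-tree $\mathfrak{t}$.
   Context: $\mathfrak{G}$ is a finite alphabet (letters with arities $\geq 1$). A $\mathfrak{G}$-tree is either the leaf (the tree with no internal node) or $\mathtt{a}[\mathfrak{s}_1,\dots,\mathfrak{s}_{|\mathtt{a}|}]$, a root decorated by $\mathtt{a}\in\mathfrak{G}$ with children $\mathfrak{s}_1,\dots,\mathfrak{s}_{|\mathtt{a}|}$; $\deg$ counts internal nodes. $\mathbf{S}_\bullet(\mathfrak{G})$ is the set of $\mathfrak{G}$-trees graded by degree. $\mathbf{V}$ is the adjoint (trees being orthonormal) of the linear map $\mathbf{V}^\star$ defined by: $\mathbf{V}^\star$ of the leaf is $0$; $\mathbf{V}^\star(\mathtt{a}[\mathfrak{s},\text{leaf},\dots,\text{leaf}]) = \mathfrak{s}$; and $\mathbf{V}^\star(\mathtt{a}[\mathfrak{s}_1,\dots,\mathfrak{s}_{|\mathtt{a}|}]) = \sum_{j\in[2,|\mathtt{a}|]}\mathtt{a}[\mathfrak{s}_1,\dots,\mathfrak{s}_{j-1},\mathbf{V}^\star(\mathfrak{s}_j),\mathfrak{s}_{j+1},\dots,\mathfrak{s}_{|\mathtt{a}|}]$ when some $\mathfrak{s}_j$, $j\geq 2$, is not the leaf. This graded graph has the leaf as root, and its hook series $\mathbf{H}_\mathbf{V}$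 is defined by $\langle x,\mathbf{H}_\mathbf{V}\rangle = [x=\text{the leaf}] + \langle\mathbf{V}^\star(x),\mathbf{H}_\mathbf{V}\rangle$ (equivalently, the number of paths from the leaf to $x$). The statistic $\tilde{h}$ is defined by $\tilde{h}(\text{leaf}) = 1$ and $\tilde{h}(\mathtt{a}[\mathfrak{s}_1,\dots,\mathfrak{s}_{|\mathtt{a}|}]) = \frac{(\deg(\mathfrak{s}_2)+\cdots+\deg(\mathfrak{s}_{|\mathtt{a}|}))!}{\deg(\mathfrak{s}_2)!\cdots\deg(\mathfrak{s}_{|\mathtt{a}|})!}\prod_{i\in[|\mathtt{a}|]}\tilde{h}(\mathfrak{s}_i)$; it equals the number of linear extensions of the twisted poset on the internal nodes of $\mathfrak{t}$ in which $u\leq' v$ iff $u=v$, or $v$ is a descendant of $u$ not lying in the first subtree of $u$, or $u$ lies in the first subtree of $v$. *)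

theory Defs
  imports Main "HOL-Library.Multiset"
begin

datatype 'g tree = Leaf | Node 'g "'g tree list"

fun wf_tree :: "'g set \<Rightarrow> ('g \<Rightarrow> nat) \<Rightarrow> 'g tree \<Rightarrow> bool" where
  "wf_tree G ar Leaf = True"
| "wf_tree G ar (Node a ts) = (a \<in> G \<and> length ts = ar a \<and> (\<forall>t\<in>set ts. wf_tree G ar t))"

fun deg :: "'g tree \<Rightarrow> nat" where
  "deg Leaf = 0"
| "deg (Node a ts) = Suc (sum_list (map deg ts))"

lemma size_nth_less_Node: "j < length ts \<Longrightarrow> size (ts ! j) < Suc (size_list size ts)"
  by (meson less_Suc_eq_le nth_mem size_list_estimation' order_refl)

text \<open>The linear map V-star, with values in nonnegative integer combinations of trees (multisets).
  Positions are 0-based: position 0 is the first subtree.\<close>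
function Vstar :: "'g tree \<Rightarrow> 'g tree multiset" where
  "Vstar Leaf = {#}"
| "Vstar (Node a ts) =
     (if ts \<noteq> [] \<and> (\<forall>t\<in>set (tl ts). t = Leaf) then {# hd ts #}
      else sum_list (map (\<lambda>j. image_mset (\<lambda>u. Node a (ts[j := u])) (Vstar (ts ! j)))
                         [1..<length ts]))"
  by pat_completeness auto
termination
  by (relation "measure size") (auto simp: size_nth_less_Node)

text \<open>Hook series coefficient: number of paths from the leaf, given by the recurrence
  h(x) = [x = leaf] + <V*(x), H>, which is well-founded since V* lowers degree by one;
  unfolded here with degree as fuel.\<close>
fun hook_fuel :: "nat \<Rightarrow> 'g tree \<Rightarrow> nat" where
  "hook_fuel 0 x = (if x = Leaf then 1 else 0)"
| "hook_fuel (Suc n) x = (if x = Leaf then 1 else 0) + sum_mset (image_mset (hook_fuel n) (Vstar x))"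

definition hook :: "'g tree \<Rightarrow> nat" where
  "hook x = hook_fuel (deg x) x"

fun htilde :: "'g tree \<Rightarrow> nat" where
  "htilde Leaf = 1"
| "htilde (Node a ts) =
     (fact (sum_list (map deg (tl ts))) div prod_list (map (\<lambda>s. fact (deg s)) (tl ts)))
     * prod_list (map htilde ts)"

end

theory Submission
  imports Defs
begin

lemma upd_sum_nat: "j < length xs \<Longrightarrow> sum_list (map (f::'a\<Rightarrow>nat) (xs[j:=x])) + f (xs!j) = sum_list (map f xs) + f x"
proof -
  assume j: "j < length xs"
  have 1: "xs[j:=x] = take j xs @ x # drop (Suc j) xs" using j by (rule upd_conv_take_nth_drop)
  have 2: "xs = take j xs @ xs!j # drop (Suc j) xs" using j by (simp add: id_take_nth_drop)
  show ?thesis by (subst 1, subst (2) 2) simp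
qed

lemma upd_prod_nat: "j < length xs \<Longrightarrow> prod_list (map (f::'a\<Rightarrow>nat) (xs[j:=x])) * f (xs!j) = prod_list (map f xs) * f x"
proof -
  assume j: "j < length xs"
  have 1: "xs[j:=x] = take j xs @ x # drop (Suc j) xs" using j by (rule upd_conv_take_nth_drop)
  have 2: "xs = take j xs @ xs!j # drop (Suc j) xs" using j by (simp add: id_take_nth_drop)
  show ?thesis by (subst 1, subst (2) 2) simp
qed

lemma in_sum_list_mset: "x \<in># sum_list Ms \<longleftrightarrow> (\<exists>M\<in>set Ms. x \<in># M)"
  by (induction Ms) auto

lemma image_sum_list_mset: "image_mset f (sum_list Ms) = sum_list (map (image_mset f) Ms)"
  by (induction Ms) auto

lemma sum_mset_sum_list: "sum_mset (sum_list Ms) = sum_list (map sum_mset Ms)"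
  by (induction Ms) auto

lemma Vstar_deg: "u \<in># Vstar x \<Longrightarrow> Suc (deg u) = deg x"
proof (induction x arbitrary: u rule: Vstar.induct)
  case 1
  then show ?case by simp
next
  case (2 a ts)
  show ?case
  proof (cases "ts \<noteq> [] \<and> (\<forall>t\<in>set (tl ts). t = Leaf)")
    case True
    then obtain s rest where ts: "ts = s # rest" and r: "\<forall>t\<in>set rest. t = Leaf"
      by (cases ts) auto
    have "sum_list (map deg rest) = 0" using r by (induction rest) auto
    then show ?thesis using 2(2) True ts by simp
  next
    case False
    then obtain j v where j: "j \<in> set [1..<length ts]" and v: "v \<in># Vstar (ts!j)"
      and u: "u = Node a (ts[j:=v])"
      using 2(2) False by (simp only: Vstar.simps if_False in_sum_list_mset) auto
    have "Suc (deg v) = deg (ts!j)" using 2(1)[OF False j v] .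
    moreover have "j < length ts" using j by simp
    from upd_sum_nat[OF this, of deg v] 
    have "sum_list (map deg (ts[j := v])) + deg (ts ! j) = sum_list (map deg ts) + deg v" .
    ultimately show ?thesis using u by simp
  qed
qed

lemma hook_Leaf: "hook Leaf = 1"
  by (simp add: hook_def)

lemma hook_nonleaf: "x \<noteq> Leaf \<Longrightarrow> hook x = sum_mset (image_mset hook (Vstar x))"
proof -
  assume x: "x \<noteq> Leaf"
  then obtain a ts where xe: "x = Node a ts" by (cases x) auto
  then obtain n where n: "deg x = Suc n" by simp
  have "hook x = sum_mset (image_mset (hook_fuel n) (Vstar x))"
    unfolding hook_def n using x by simp
  also have "image_mset (hook_fuel n) (Vstar x) = image_mset hook (Vstar x)"
  proof (rule image_mset_cong)
    fix u assume "u \<in># Vstar x"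
    from Vstar_deg[OF this] n have "deg u = n" by simp
    then show "hook_fuel n u = hook u" by (simp add: hook_def)
  qed
  finally show ?thesis .
qed

lemma sum_mset_mult_left: "c * sum_mset (image_mset f M) = sum_mset (image_mset (\<lambda>x. c * (f x::nat)) M)"
  by (induction M) (auto simp: algebra_simps)

lemma mainB:
  fixes a :: 'g and s :: "'g tree"
  shows "\<forall>rest::'g tree list. sum_list (map deg rest) = N \<longrightarrow>
     hook (Node a (s#rest)) * prod_list (map (\<lambda>t. fact (deg t)) rest)
       = fact N * hook s * prod_list (map hook rest)"
proof (induction N rule: less_induct)
  case (less N)
  show ?case
  proof (intro allI impI)
    fix rest :: "'g tree list" assume N: "sum_list (map deg rest) = N"
    show "hook (Node a (s#rest)) * prod_list (map (\<lambda>t. fact (deg t)) rest)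
       = fact N * hook s * prod_list (map hook rest)"
    proof (cases "\<forall>t\<in>set rest. t = Leaf")
      case True
      have "hook (Node a (s#rest)) = hook s" using True by (simp add: hook_nonleaf)
      moreover have "sum_list (map deg rest) = 0" "prod_list (map (\<lambda>t. fact (deg t)) rest) = (1::nat)"
        "prod_list (map hook rest) = 1"
        using True by (induction rest) (auto simp: hook_Leaf)
      ultimately show ?thesis using N by simp
    next
      case False
      define P where "P = prod_list (map (\<lambda>t. fact (deg t) :: nat) rest)"
      define H where "H = hook s * prod_list (map hook rest)"
      have V: "Vstar (Node a (s#rest)) = sum_list (map (\<lambda>i. image_mset (\<lambda>u. Node a (s # rest[i := u])) (Vstar (rest ! i))) [0..<length rest])"
      proof -
        have "Vstar (Node a (s#rest)) = sum_list (map (\<lambda>j. image_mset (\<lambda>u. Node a ((s#rest)[j:=u])) (Vstar ((s#rest)!j))) [1..<length (s#rest)])"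
        proof -
          have c: "\<not> (s#rest \<noteq> [] \<and> (\<forall>t\<in>set (tl (s#rest)). t = Leaf))" using False by simp
          show ?thesis by (simp only: Vstar.simps(2) c if_False)
        qed
        also have "[1..<length (s#rest)] = map Suc [0..<length rest]"
          by (simp only: length_Cons map_Suc_upt One_nat_def)
        finally show ?thesis by (simp add: comp_def del: upt_Suc)
      qed
      have hterm: "P * sum_mset (image_mset (\<lambda>u. hook (Node a (s # rest[i := u]))) (Vstar (rest ! i)))
          = deg (rest!i) * (fact (N - 1) * H)" if i: "i < length rest" for i
      proof (cases "rest!i = Leaf")
        case True
        then show ?thesis by simp
      next
        case nl: False
        define Q where "Q = prod_list (map hook (take i rest @ drop (Suc i) rest))"
        have Qu: "prod_list (map hook (rest[i:=u])) = Q * hook u" for u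
          unfolding Q_def using upd_conv_take_nth_drop[OF i, of u] by simp
        have Qr: "prod_list (map hook rest) = Q * hook (rest!i)"
          using Qu[of "rest!i"] by simp
        have "P * sum_mset (image_mset (\<lambda>u. hook (Node a (s # rest[i := u]))) (Vstar (rest ! i)))
           = sum_mset (image_mset (\<lambda>u. (deg (rest!i) * fact (N - 1) * hook s * Q) * hook u) (Vstar (rest ! i)))"
          unfolding sum_mset_mult_left
        proof (rule arg_cong[where f=sum_mset], rule image_mset_cong)
          fix u assume u: "u \<in># Vstar (rest!i)"
          have du: "Suc (deg u) = deg (rest!i)" using Vstar_deg[OF u] .
          define P' where "P' = prod_list (map (\<lambda>t. fact (deg t) :: nat) (rest[i:=u]))"
          have sd: "sum_list (map deg (rest[i:=u])) + deg (rest!i) = N + deg u"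
            using upd_sum_nat[OF i, of deg u] N by simp
          have Nlt: "N - 1 < N" and sdN: "sum_list (map deg (rest[i:=u])) = N - 1"
            using sd du by auto
          have IH: "hook (Node a (s # rest[i:=u])) * P' = fact (N - 1) * hook s * prod_list (map hook (rest[i:=u]))"
            using less[OF Nlt] sdN unfolding P'_def by blast
          have PP: "P' * fact (deg (rest!i)) = P * fact (deg u)"
            using upd_prod_nat[OF i, of "\<lambda>t. fact (deg t) :: nat" u] unfolding P_def P'_def by simp
          have "fact (deg (rest!i)) = deg (rest!i) * (fact (deg u) :: nat)"
            using du[symmetric] by simp
          with PP have "(deg (rest!i) * P') * fact (deg u) = P * fact (deg u)"
            by (simp add: algebra_simps)
          then have PP2: "P = deg (rest!i) * P'" by simp
          show "P * hook (Node a (s # rest[i := u])) = deg (rest!i) * fact (N - 1) * hook s * Q * hook u"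
            using IH PP2 Qu[of u] by (simp add: algebra_simps)
        qed
        also have "\<dots> = deg (rest!i) * fact (N - 1) * hook s * Q * hook (rest!i)"
          using hook_nonleaf[OF nl] by (simp add: sum_mset_mult_left[symmetric])
        finally show ?thesis unfolding H_def Qr by (simp add: algebra_simps)
      qed
      have "P * hook (Node a (s#rest)) = P * sum_list (map (\<lambda>i. sum_mset (image_mset (\<lambda>u. hook (Node a (s # rest[i := u]))) (Vstar (rest ! i)))) [0..<length rest])"
      proof -
        have "hook (Node a (s#rest)) = sum_mset (image_mset hook (Vstar (Node a (s#rest))))"
          by (rule hook_nonleaf) simp
        then show ?thesis
          unfolding V image_sum_list_mset sum_mset_sum_list
          by (simp add: comp_def image_mset.compositionality del: upt_Suc)
      qed
      also have "\<dots> = sum_list (map (\<lambda>i. deg (rest!i) * (fact (N - 1) * H)) [0..<length rest])"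
        unfolding sum_list_const_mult[symmetric] map_map comp_def
        by (rule arg_cong[where f=sum_list], rule map_cong, simp, rule hterm, simp)
      also have "\<dots> = sum_list (map (\<lambda>i. deg (rest!i)) [0..<length rest]) * (fact (N - 1) * H)"
        by (simp add: sum_list_mult_const)
      also have "sum_list (map (\<lambda>i. deg (rest!i)) [0..<length rest]) = N"
      proof -
        have "map (\<lambda>i. deg (rest!i)) [0..<length rest] = map deg rest"
          by (rule nth_equalityI) auto
        then show ?thesis using N by simp
      qed
      also have "N * (fact (N - 1) * H) = fact N * H"
      proof -
        obtain t where t: "t \<in> set rest" "t \<noteq> Leaf" using False by blast
        obtain b us where "t = Node b us" using t(2) by (cases t) auto
        then have "deg t > 0" by simp
        moreover have "deg t \<le> N" using member_le_sum_list[of "deg t" "map deg rest"] t(1) N by simp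
        ultimately have "N > 0" by simp
        then show ?thesis by (cases N) (auto simp: algebra_simps)
      qed
      finally have "P * hook (Node a (s#rest)) = fact N * H" .
      then show ?thesis unfolding H_def P_def by (simp only: ac_simps)
    qed
  qed
qed


fun chain :: "'g \<Rightarrow> nat \<Rightarrow> 'g tree" where
  "chain a 0 = Leaf"
| "chain a (Suc n) = Node a [chain a n]"

lemma deg_chain: "deg (chain a n) = n"
  by (induction n) auto

lemma hook_chain: "hook (chain a n) = 1"
proof (induction n)
  case 0
  then show ?case by (simp add: hook_Leaf)
next
  case (Suc n)
  have "hook (chain a (Suc n)) = sum_mset (image_mset hook (Vstar (chain a (Suc n))))"
    by (rule hook_nonleaf) simp
  also have "Vstar (chain a (Suc n)) = {# chain a n #}" by simp
  finally show ?case using Suc by simp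
qed

lemma fact_dvd:
  fixes rest :: "'g tree list" and a :: 'g
  shows "prod_list (map (\<lambda>t. fact (deg t) :: nat) rest) dvd fact (sum_list (map deg rest))"
proof -
  define rest' where "rest' = map (\<lambda>t. chain a (deg t)) rest"
  have d: "map deg rest' = map deg rest" unfolding rest'_def by (simp add: deg_chain comp_def)
  have h: "prod_list (map hook rest') = 1" unfolding rest'_def
    by (induction rest) (auto simp: hook_chain)
  have m: "hook (Node a (Leaf#rest')) * prod_list (map (\<lambda>t. fact (deg t) :: nat) rest')
     = fact (sum_list (map deg rest')) * hook (Leaf :: 'g tree) * prod_list (map hook rest')"
    by (rule mp[OF spec[OF mainB[of "sum_list (map deg rest')" a Leaf], of rest'] refl])
  then have "hook (Node a (Leaf#rest')) * prod_list (map (\<lambda>t. fact (deg t) :: nat) rest)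
     = fact (sum_list (map deg rest))"
  proof -
    have "prod_list (map (\<lambda>t. fact (deg t) :: nat) rest') = prod_list (map (\<lambda>t. fact (deg t)) rest)"
      unfolding rest'_def by (simp add: deg_chain comp_def)
    then show ?thesis using m d h by (simp add: hook_Leaf)
  qed
  then show ?thesis by (metis dvd_triv_right)
qed

theorem proposition2p6:
  fixes G :: "'g set" and ar :: "'g \<Rightarrow> nat" and t :: "'g tree"
  assumes "finite G"
    and "\<forall>a\<in>G. ar a \<ge> 1"
    and "wf_tree G ar t"
  shows "hook t = htilde t"
  using assms(3)
proof (induction t)
  case Leaf
  then show ?case by (simp add: hook_Leaf)
next
  case (Node a ts)
  have ne: "ts \<noteq> []" using Node.prems assms(2) by auto
  then obtain s rest where ts: "ts = s # rest" by (cases ts) auto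
  have ih: "hook t = htilde t" if "t \<in> set ts" for t
    using Node.IH Node.prems that by auto
  have ph: "prod_list (map hook ts) = prod_list (map htilde ts)"
    using ih by (metis map_cong)
  define N where "N = sum_list (map deg rest)"
  define P where "P = prod_list (map (\<lambda>t. fact (deg t) :: nat) rest)"
  have B: "hook (Node a (s#rest)) * P = fact N * hook s * prod_list (map hook rest)"
    unfolding N_def P_def by (rule mp[OF spec[OF mainB[of "sum_list (map deg rest)" a s], of rest] refl])
  obtain M where M: "fact N = P * M" using fact_dvd[of rest] unfolding N_def P_def by blast
  have Ppos: "P > 0" unfolding P_def by (induction rest) auto
  have "hook (Node a (s#rest)) * P = (M * prod_list (map hook ts)) * P"
    using B M ts by (simp add: ac_simps)
  then have "hook (Node a ts) = M * prod_list (map hook ts)" using Ppos ts by simp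
  moreover have "fact N div P = M" using M Ppos by simp
  ultimately show ?case using ts ph unfolding N_def P_def by simp
qed

end
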